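(* Let $0<a<1$ and $b>0$. For every $u>0$, $$\pi_{\rm RSB}(u;a,b)=\frac{1}{B(a,b)}\int_{(0,\infty)^3} e^{-vu}\,\frac{v^{x+y}e^{-v}}{\Gamma(x+y+1)}\,\frac{x^{-a}}{\Gamma(1-a)}\,\frac{y^{a+b-1}e^{-y}}{\Gamma(a+b)}\,dv\,dx\,dy =\int_{(0,\infty)^3}\mathrm{Ex}(u\mid v)\,\mathrm{Ga}(v\mid x+y,1)\,g(x,y)\,dv\,dx\,dy,$$ where $$g(x,y)=\frac{1}{B(a,b)\Gamma(1-a)\Gamma(a+b)}\,\frac{x^{-a}y^{a+b-1}e^{-y}}{x+y},\qquad x,y>0.$$
   Context: For $a,b>0$, the rescaled beta (RSB) density is $\pi_{\rm RSB}(u;a,b)=\frac{1}{B(a,b)}\frac{\{\log(1+u)\}^{a-1}}{1+u}\frac{1}{\{1+\log(1+u)\}^{a+b}}$ for $u>0$, where $B$ is the beta function. $\mathrm{Ex}(u\mid v)=ve^{-vu}$ denotes the exponential density with rate $v$, and $\mathrm{Ga}(v\mid\alpha,\beta)=\beta^\alpha v^{\alpha-1}e^{-\beta v}/\Gamma(\alpha)$ denotes the gamma density with shape $\alpha$ and rate $\beta$. *)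

theory Defs
  imports "HOL-Analysis.Analysis"
begin

definition RSB_density :: "real \<Rightarrow> real \<Rightarrow> real \<Rightarrow> real" where
  "RSB_density a b u = (1 / Beta a b) * (ln (1 + u)) powr (a - 1) / (1 + u)
       * (1 / (1 + ln (1 + u)) powr (a + b))"

definition Ex_density :: "real \<Rightarrow> real \<Rightarrow> real" where
  "Ex_density u v = v * exp (- v * u)"

definition Ga_density :: "real \<Rightarrow> real \<Rightarrow> real \<Rightarrow> real" where
  "Ga_density v \<alpha> \<beta> = \<beta> powr \<alpha> * v powr (\<alpha> - 1) * exp (- \<beta> * v) / Gamma \<alpha>"

definition g_mix :: "real \<Rightarrow> real \<Rightarrow> real \<Rightarrow> real \<Rightarrow> real" where
  "g_mix a b x y = 1 / (Beta a b * Gamma (1 - a) * Gamma (a + b))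
       * (x powr (- a) * y powr (a + b - 1) * exp (- y)) / (x + y)"

end

theory Submission
  imports Defs
begin

lemma gamma_nn:
  fixes s c :: real
  assumes s: "s > 0" and c: "c > 0"
  shows "(\<integral>\<^sup>+t. ennreal (indicator {0<..} t * t powr (s - 1) * exp (- c * t)) \<partial>lborel)
          = ennreal (Gamma s / c powr s)"
proof -
  define f where "f = (\<lambda>t::real. ennreal (indicator {0<..} t * t powr (s - 1) * exp (- t)))"
  have fm[measurable]: "f \<in> borel_measurable borel" unfolding f_def by measurable
  have "ennreal (Gamma s) = (\<integral>\<^sup>+t. f t \<partial>lborel)"
    unfolding Gamma_conv_nn_integral_real[OF s] f_def
    by (intro nn_integral_cong) (auto simp: indicator_def exp_minus field_simps)
  also have "\<dots> = ennreal c * (\<integral>\<^sup>+t. f (0 + c * t) \<partial>lborel)"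
    using nn_integral_real_affine[OF fm, of c 0] c by simp
  also have "(\<integral>\<^sup>+t. f (0 + c * t) \<partial>lborel) = 
      (\<integral>\<^sup>+t. ennreal (c powr (s - 1)) * ennreal (indicator {0<..} t * t powr (s - 1) * exp (- c * t)) \<partial>lborel)"
    unfolding f_def using c
    by (intro nn_integral_cong) (auto simp: indicator_def powr_mult ennreal_mult' [symmetric] zero_less_mult_iff)
  also have "\<dots> = ennreal (c powr (s - 1)) * (\<integral>\<^sup>+t. ennreal (indicator {0<..} t * t powr (s - 1) * exp (- c * t)) \<partial>lborel)"
    by (rule nn_integral_cmult) measurable
  finally have eq: "ennreal (Gamma s) = ennreal (c * c powr (s - 1)) * (\<integral>\<^sup>+t. ennreal (indicator {0<..} t * t powr (s - 1) * exp (- c * t)) \<partial>lborel)"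
    using c by (simp add: ennreal_mult' mult.assoc)
  have cs: "c * c powr (s - 1) = c powr s" using c by (simp add: powr_diff)
  have "ennreal (Gamma s / c powr s) = ennreal (Gamma s) / ennreal (c powr s)"
    using c s by (simp add: divide_ennreal Gamma_real_pos)
  also have "\<dots> = (\<integral>\<^sup>+t. ennreal (indicator {0<..} t * t powr (s - 1) * exp (- c * t)) \<partial>lborel)"
    unfolding eq cs using c
    using ennreal_mult_divide_eq[of "ennreal (c powr s)" "(\<integral>\<^sup>+t. ennreal (indicator {0<..} t * t powr (s - 1) * exp (- c * t)) \<partial>lborel)"]
    by (simp add: mult.commute)
  finally show ?thesis ..
qed

lemma gamma_nn_c:
  fixes s c k :: real
  assumes s: "s > 0" and c: "c > 0" and k: "k \<ge> 0"
  shows "(\<integral>\<^sup>+t. ennreal (k * (indicator {0<..} t * t powr (s - 1) * exp (- c * t))) \<partial>lborel)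
          = ennreal (k * (Gamma s / c powr s))"
proof -
  have "(\<integral>\<^sup>+t. ennreal (k * (indicator {0<..} t * t powr (s - 1) * exp (- c * t))) \<partial>lborel)
     = (\<integral>\<^sup>+t. ennreal k * ennreal (indicator {0<..} t * t powr (s - 1) * exp (- c * t)) \<partial>lborel)"
    using k by (intro nn_integral_cong) (auto simp: ennreal_mult' indicator_def)
  also have "\<dots> = ennreal k * (\<integral>\<^sup>+t. ennreal (indicator {0<..} t * t powr (s - 1) * exp (- c * t)) \<partial>lborel)"
    by (rule nn_integral_cmult) measurable
  also have "\<dots> = ennreal (k * (Gamma s / c powr s))"
    by (subst gamma_nn[OF s c], subst ennreal_mult'[symmetric]) (use k in auto)
  finally show ?thesis .
qed

lemma meas_G:
  fixes a b u :: real
  assumes "0 < a" "a < 1" "0 < b" "0 < u"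
  shows "(\<lambda>p. indicator ({0<..} \<times> {0<..} \<times> {0<..}) p * (\<lambda>(v::real, x::real, y::real).
              exp (- v * u) * (v powr (x + y) * exp (- v) / Gamma (x + y + 1))
              * (x powr (- a) / Gamma (1 - a))
              * (y powr (a + b - 1) * exp (- y) / Gamma (a + b))) p) \<in> borel_measurable borel"
proof -
  have "(\<lambda>p. indicator ({0<..} \<times> {0<..} \<times> {0<..}) p *\<^sub>R (\<lambda>p.
              exp (- fst p * u) * (fst p powr (fst (snd p) + snd (snd p)) * exp (- fst p) / Gamma (fst (snd p) + snd (snd p) + 1))
              * (fst (snd p) powr (- a) / Gamma (1 - a))
              * (snd (snd p) powr (a + b - 1) * exp (- snd (snd p)) / Gamma (a + b))) p) \<in> borel_measurable borel"
  proof (rule borel_measurable_continuous_on_indicator)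
    show "{0<..} \<times> {0<..} \<times> {0<..} \<in> sets (borel :: (real \<times> real \<times> real) measure)"
      by (intro borel_open open_Times open_greaterThan)
    show "continuous_on ({0<..} \<times> {0<..} \<times> {0<..}) (\<lambda>p::real\<times>real\<times>real.
              exp (- fst p * u) * (fst p powr (fst (snd p) + snd (snd p)) * exp (- fst p) / Gamma (fst (snd p) + snd (snd p) + 1))
              * (fst (snd p) powr (- a) / Gamma (1 - a))
              * (snd (snd p) powr (a + b - 1) * exp (- snd (snd p)) / Gamma (a + b)))"
    proof (rule continuous_at_imp_continuous_on, rule ballI)
      fix p :: "real\<times>real\<times>real" assume p: "p \<in> {0<..} \<times> {0<..} \<times> {0<..}"
      obtain v x y where pv: "p = (v, x, y)" by (cases p) auto
      have nz: "z > 0 \<Longrightarrow> z \<notin> \<int>\<^sub>\<le>\<^sub>0" for z :: real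
        using nonpos_Ints_nonpos by fastforce
      have gn: "z > 0 \<Longrightarrow> Gamma z \<noteq> 0" for z :: real
        by (metis Gamma_real_pos order_less_irrefl)
      show "isCont (\<lambda>p::real\<times>real\<times>real.
              exp (- fst p * u) * (fst p powr (fst (snd p) + snd (snd p)) * exp (- fst p) / Gamma (fst (snd p) + snd (snd p) + 1))
              * (fst (snd p) powr (- a) / Gamma (1 - a))
              * (snd (snd p) powr (a + b - 1) * exp (- snd (snd p)) / Gamma (a + b))) p"
        unfolding pv using p pv assms gn[of "x+y+1"] gn[of "1-a"] gn[of "a+b"] by (auto intro!: continuous_intros nz)
    qed
  qed
  then show ?thesis by (simp add: case_prod_unfold)
qed

lemma gnz: "z > 0 \<Longrightarrow> Gamma z \<noteq> (0::real)"
  by (metis Gamma_real_pos order_less_irrefl)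

lemma alg:
  fixes G W E1 E2 X Y ey g1 g2 :: real
  shows "G \<noteq> 0 \<Longrightarrow> W \<noteq> 0 \<Longrightarrow> g1 \<noteq> 0 \<Longrightarrow> g2 \<noteq> 0 \<Longrightarrow>
    1 / G * (X / g1) * (Y * ey / g2) * (G / (W * exp E1 * exp E2))
    = 1 * (1 / W * (X * inverse (exp E1) / g1) * (Y * (ey * inverse (exp E2)) / g2))"
  by (simp add: field_simps)

lemma main_nn:
  fixes a b u :: real
  assumes ab: "0 < a" "a < 1" "0 < b" "0 < u"
  defines "F \<equiv> (\<lambda>(v::real, x::real, y::real).
              exp (- v * u) * (v powr (x + y) * exp (- v) / Gamma (x + y + 1))
              * (x powr (- a) / Gamma (1 - a))
              * (y powr (a + b - 1) * exp (- y) / Gamma (a + b)))"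
  defines "S \<equiv> ({0<..} \<times> {0<..} \<times> {0<..} :: (real \<times> real \<times> real) set)"
  shows "(\<integral>\<^sup>+p. ennreal (indicator S p * F p) \<partial>lborel)
     = ennreal (ln (1 + u) powr (a - 1) / (1 + u) * (1 / (1 + ln (1 + u)) powr (a + b)))"
proof -
  define L where "L = ln (1 + u)"
  have L: "L > 0" unfolding L_def using ab by simp
  have gn: "z > 0 \<Longrightarrow> Gamma z > 0" for z :: real by (rule Gamma_real_pos)
  have mG[measurable]: "(\<lambda>p. indicator S p * F p) \<in> borel_measurable borel"
    unfolding S_def F_def by (rule meas_G[OF ab])
  define H where "H = (\<lambda>w::real\<times>real. (1/(1+u)) * (fst w powr (- a) * exp (- L * fst w) / Gamma (1 - a))
         * (snd w powr (a + b - 1) * exp (- (1 + L) * snd w) / Gamma (a + b)))"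
  define A where "A = (\<lambda>x::real. 1 / (1 + u) / Gamma (1 - a) * (indicator {0<..} x * x powr ((1 - a) - 1) * exp (- L * x)))"
  define B where "B = (\<lambda>y::real. 1 / Gamma (a + b) * (indicator {0<..} y * y powr ((a + b) - 1) * exp (- (1 + L) * y)))"
  have mH[measurable]: "(\<lambda>w. indicator ({0<..} \<times> {0<..}) w * H w) \<in> borel_measurable borel"
  proof -
    have "(\<lambda>w. indicator ({0<..} \<times> {0<..}) w *\<^sub>R H w) \<in> borel_measurable borel"
    proof (rule borel_measurable_continuous_on_indicator)
      show "{0<..} \<times> {0<..} \<in> sets (borel::(real\<times>real) measure)"
        by (intro borel_open open_Times open_greaterThan)
      show "continuous_on ({0<..} \<times> {0<..}) H"
      proof (rule continuous_at_imp_continuous_on, rule ballI)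
        fix w :: "real \<times> real" assume "w \<in> {0<..} \<times> {0<..}"
        moreover have "Gamma (1 - a) \<noteq> 0" "Gamma (a + b) \<noteq> 0" by (rule gnz, use ab in simp)+
        ultimately show "isCont H w" unfolding H_def using ab by (cases w) (auto intro!: continuous_intros)
      qed
    qed
    then show ?thesis by simp
  qed
  have eq3: "(lborel :: (real \<times> real \<times> real) measure) = lborel \<Otimes>\<^sub>M lborel"
    by (rule lborel_prod[symmetric])
  have eq2: "(lborel :: (real \<times> real) measure) = lborel \<Otimes>\<^sub>M lborel"
    by (rule lborel_prod[symmetric])
  have "(\<integral>\<^sup>+p. ennreal (indicator S p * F p) \<partial>lborel)
      = (\<integral>\<^sup>+p. ennreal (indicator S p * F p) \<partial>(lborel \<Otimes>\<^sub>M lborel))"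
    by (subst eq3) (rule refl)
  also have "\<dots> = (\<integral>\<^sup>+w. \<integral>\<^sup>+v. ennreal (indicator S (v, w) * F (v, w)) \<partial>lborel \<partial>lborel)"
    by (rule lborel_pair.nn_integral_snd[symmetric]) (simp add: lborel_prod)
  also have "\<dots> = (\<integral>\<^sup>+w. ennreal (indicator ({0<..} \<times> {0<..}) w * H w) \<partial>lborel)"
  proof (intro nn_integral_cong)
    fix w :: "real \<times> real"
    obtain x y where w: "w = (x, y)" by (cases w) auto
    show "(\<integral>\<^sup>+v. ennreal (indicator S (v, w) * F (v, w)) \<partial>lborel) = ennreal (indicator ({0<..} \<times> {0<..}) w * H w)"
    proof (cases "x > 0 \<and> y > 0")
      case True
      define k where "k = 1 / Gamma (x + y + 1) * (x powr (- a) / Gamma (1 - a)) * (y powr (a + b - 1) * exp (- y) / Gamma (a + b))"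
      have k: "k \<ge> 0" unfolding k_def using True ab gn[of "x+y+1"] gn[of "1-a"] gn[of "a+b"] by simp
      have "(\<integral>\<^sup>+v. ennreal (indicator S (v, w) * F (v, w)) \<partial>lborel)
          = (\<integral>\<^sup>+v. ennreal (k * (indicator {0<..} v * v powr ((x + y + 1) - 1) * exp (- (1 + u) * v))) \<partial>lborel)"
        using True unfolding w S_def F_def k_def
        by (intro nn_integral_cong) (auto simp: indicator_def exp_diff exp_minus field_simps)
      also have "\<dots> = ennreal (k * (Gamma (x + y + 1) / (1 + u) powr (x + y + 1)))"
        using True ab k by (intro gamma_nn_c) auto
      also have "k * (Gamma (x + y + 1) / (1 + u) powr (x + y + 1)) = indicator ({0<..} \<times> {0<..}) w * H w"
      proof -
        have pw: "(1 + u) powr (x + y + 1) = (1 + u) * exp (L * x) * exp (L * y)"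
        proof -
          have "(1 + u) powr (x + y + 1) = exp ((x + y + 1) * L)" using ab by (simp add: powr_def L_def)
          also have "\<dots> = exp L * exp (L * x) * exp (L * y)" by (simp add: exp_add[symmetric] algebra_simps)
          also have "exp L = 1 + u" using ab by (simp add: L_def)
          finally show ?thesis .
        qed
        have g1: "Gamma (1 + (x + y)) \<noteq> 0" "Gamma (x + y + 1) \<noteq> 0" "Gamma (1 - a) \<noteq> 0" "Gamma (a + b) \<noteq> 0"
          by (rule gnz, use True ab in simp)+
        have e1: "exp (- L * x) = inverse (exp (L * x))" by (simp add: exp_minus)
        have e2: "exp (- (1 + L) * y) = exp (- y) * inverse (exp (L * y))"
          by (simp add: exp_minus[symmetric] exp_add[symmetric] algebra_simps)
        have ind: "indicator ({0<..} \<times> {0<..}) (x, y) = (1::real)" using True by (simp add: indicator_def)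
        show ?thesis
          unfolding k_def H_def pw ind e1 e2 w fst_conv snd_conv
          by (rule alg) (use g1 ab in auto)
      qed
      finally show ?thesis .
    next
      case False
      then show ?thesis unfolding w S_def by (auto simp: indicator_def)
    qed
  qed
  also have "\<dots> = (\<integral>\<^sup>+w. ennreal (indicator ({0<..} \<times> {0<..}) w * H w) \<partial>(lborel \<Otimes>\<^sub>M lborel))"
    by (subst eq2) (rule refl)
  also have "\<dots> = (\<integral>\<^sup>+x. \<integral>\<^sup>+y. ennreal (indicator ({0<..} \<times> {0<..}) (x, y) * H (x, y)) \<partial>lborel \<partial>lborel)"
    by (rule lborel.nn_integral_fst[symmetric, where f="\<lambda>w. ennreal (indicator ({0<..} \<times> {0<..}) w * H w)", simplified])
       (simp add: lborel_prod, measurable)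
  also have "\<dots> = (\<integral>\<^sup>+x. ennreal (A x) * (\<integral>\<^sup>+y. ennreal (B y) \<partial>lborel) \<partial>lborel)"
  proof (intro nn_integral_cong)
    fix x :: real
    have "(\<integral>\<^sup>+y. ennreal (indicator ({0<..} \<times> {0<..}) (x, y) * H (x, y)) \<partial>lborel)
        = (\<integral>\<^sup>+y. ennreal (A x) * ennreal (B y) \<partial>lborel)"
    proof (intro nn_integral_cong)
      fix y :: real
      have "indicator ({0<..} \<times> {0<..}) (x, y) * H (x, y) = A x * B y"
        unfolding A_def B_def H_def by (auto simp: indicator_def)
      moreover have "A x \<ge> 0" unfolding A_def using ab by (auto simp: indicator_def)
      ultimately show "ennreal (indicator ({0<..} \<times> {0<..}) (x, y) * H (x, y)) = ennreal (A x) * ennreal (B y)"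
        by (simp add: ennreal_mult')
    qed
    also have "\<dots> = ennreal (A x) * (\<integral>\<^sup>+y. ennreal (B y) \<partial>lborel)"
      by (rule nn_integral_cmult) (simp add: B_def)
    finally show "(\<integral>\<^sup>+y. ennreal (indicator ({0<..} \<times> {0<..}) (x, y) * H (x, y)) \<partial>lborel)
        = ennreal (A x) * (\<integral>\<^sup>+y. ennreal (B y) \<partial>lborel)" .
  qed
  also have "\<dots> = (\<integral>\<^sup>+x. ennreal (A x) \<partial>lborel) * (\<integral>\<^sup>+y. ennreal (B y) \<partial>lborel)"
    by (rule nn_integral_multc) (simp add: A_def)
  also have "(\<integral>\<^sup>+x. ennreal (A x) \<partial>lborel) = ennreal (1 / (1 + u) / Gamma (1 - a) * (Gamma (1 - a) / L powr (1 - a)))"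
    unfolding A_def using ab L by (intro gamma_nn_c) auto
  also have "(\<integral>\<^sup>+y. ennreal (B y) \<partial>lborel) = ennreal (1 / Gamma (a + b) * (Gamma (a + b) / (1 + L) powr (a + b)))"
    unfolding B_def using ab L by (intro gamma_nn_c) auto
  also have "ennreal (1 / (1 + u) / Gamma (1 - a) * (Gamma (1 - a) / L powr (1 - a))) * ennreal (1 / Gamma (a + b) * (Gamma (a + b) / (1 + L) powr (a + b)))
     = ennreal (ln (1 + u) powr (a - 1) / (1 + u) * (1 / (1 + ln (1 + u)) powr (a + b)))"
  proof -
    have p1: "L powr (a - 1) = 1 / L powr (1 - a)"
      using powr_minus_divide[of L "1 - a"] by simp
    have g: "Gamma (1 - a) \<noteq> 0" "Gamma (a + b) \<noteq> 0" by (rule gnz, use ab in simp)+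
    have "1 / (1 + u) / Gamma (1 - a) * (Gamma (1 - a) / L powr (1 - a)) * (1 / Gamma (a + b) * (Gamma (a + b) / (1 + L) powr (a + b)))
       = L powr (a - 1) / (1 + u) * (1 / (1 + L) powr (a + b))"
      unfolding p1 using g by simp
    moreover have "1 / (1 + u) / Gamma (1 - a) * (Gamma (1 - a) / L powr (1 - a)) \<ge> 0"
      using ab L by (simp add: gn)
    ultimately show ?thesis unfolding L_def by (simp add: ennreal_mult'[symmetric])
  qed
  finally show ?thesis .
qed

theorem theorem1:
  fixes a b u :: real
  assumes "0 < a" "a < 1" "0 < b" "0 < u"
  shows "RSB_density a b u =
           (1 / Beta a b) *
           (\<integral>p \<in> {0<..} \<times> {0<..} \<times> {0<..}. (\<lambda>(v::real, x::real, y::real).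
              exp (- v * u) * (v powr (x + y) * exp (- v) / Gamma (x + y + 1))
              * (x powr (- a) / Gamma (1 - a))
              * (y powr (a + b - 1) * exp (- y) / Gamma (a + b))) p \<partial>lborel)
       \<and> RSB_density a b u =
           (\<integral>p \<in> {0<..} \<times> {0<..} \<times> {0<..}. (\<lambda>(v::real, x::real, y::real).
              Ex_density u v * Ga_density v (x + y) 1 * g_mix a b x y) p \<partial>lborel)"
proof -
  define F where "F = (\<lambda>(v::real, x::real, y::real).
              exp (- v * u) * (v powr (x + y) * exp (- v) / Gamma (x + y + 1))
              * (x powr (- a) / Gamma (1 - a))
              * (y powr (a + b - 1) * exp (- y) / Gamma (a + b)))"
  define S where "S = ({0<..} \<times> {0<..} \<times> {0<..} :: (real \<times> real \<times> real) set)"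
  define K where "K = ln (1 + u) powr (a - 1) / (1 + u) * (1 / (1 + ln (1 + u)) powr (a + b))"
  have nn: "(\<integral>\<^sup>+p. ennreal (indicator S p * F p) \<partial>lborel) = ennreal K"
    unfolding F_def S_def K_def by (rule main_nn[OF assms])
  have mG[measurable]: "(\<lambda>p. indicator S p * F p) \<in> borel_measurable borel"
    unfolding S_def F_def by (rule meas_G[OF assms])
  have Fpos: "indicator S p * F p \<ge> 0" for p
  proof (cases "p \<in> S")
    case True
    then obtain v x y where p: "p = (v, x, y)" "v > 0" "x > 0" "y > 0" unfolding S_def by auto
    then show ?thesis unfolding F_def using assms
      by (simp add: Gamma_real_pos)
  qed simp
  have K0: "K \<ge> 0" unfolding K_def using assms by simp
  have hb: "has_bochner_integral lborel (\<lambda>p. indicator S p * F p) K"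
    by (rule has_bochner_integral_nn_integral) (auto simp: Fpos K0 nn)
  have I: "(\<integral>p \<in> S. F p \<partial>lborel) = K"
    unfolding set_lebesgue_integral_def using has_bochner_integral_integral_eq[OF hb] by simp
  have R: "RSB_density a b u = 1 / Beta a b * K"
    unfolding RSB_density_def K_def by simp
  have Bnz: "Beta a b \<noteq> 0" using assms unfolding Beta_def by (simp add: gnz)
  have pt: "Ex_density u v * Ga_density v (x + y) 1 * g_mix a b x y = 1 / Beta a b * F (v, x, y)"
    if "v > 0" "x > 0" "y > 0" for v x y
  proof -
    have g1: "Gamma (x + y + 1) = (x + y) * Gamma (x + y)"
      by (rule Gamma_plus1) (use that nonpos_Ints_nonpos in fastforce)
    have g1': "Gamma (1 + (x + y)) = (x + y) * Gamma (x + y)" using g1 by (simp add: add.commute)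
    have vp: "v * v powr (x + y - 1) = v powr (x + y)"
      using that by (simp add: powr_diff)
    have "Gamma (x + y) \<noteq> 0" "Gamma (1 - a) \<noteq> 0" "Gamma (a + b) \<noteq> 0"
      by (rule gnz, use that assms in simp)+
    then show ?thesis
      unfolding Ex_density_def Ga_density_def g_mix_def F_def g1 using that Bnz
      by (simp add: field_simps vp[symmetric] exp_minus) (subst g1', simp add: algebra_simps)
  qed
  have "(\<integral>p \<in> S. (\<lambda>(v, x, y). Ex_density u v * Ga_density v (x + y) 1 * g_mix a b x y) p \<partial>lborel)
      = (\<integral>p. 1 / Beta a b * (indicator S p * F p) \<partial>lborel)"
    unfolding set_lebesgue_integral_def
    by (rule Bochner_Integration.integral_cong) (auto simp: S_def indicator_def pt)
  also have "\<dots> = 1 / Beta a b * K"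
    using has_bochner_integral_integral_eq[OF hb] by simp
  finally show ?thesis using I R unfolding S_def F_def by simp
qed

end
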